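(* Let $f:\{0,1\}^N\to\{0,1\}$ be a partial function. Then \[\mathrm{D}(f)\leq 2\mathrm{R}_0(f)\mathrm{Bal}(f).\]
   Context: $\mathrm{D}(f)$ is deterministic and $\mathrm{R}_0(f)$ zero-error randomized query complexity. $\mathrm{Bal}(f)$ is $0$ if $f$ is constant, and otherwise $\min\{1+\log|f^{-1}(0)|,\,1+\log|f^{-1}(1)|\}$ (log base 2). *)

theory Defs
  imports "HOL-Probability.Probability"
begin

text \<open>Inputs are bit strings of length N (bool lists). A partial Boolean function is
  f :: bool list => bool option; its domain is the set of length-N strings where it is defined.\<close>

definition dom_pf :: "nat \<Rightarrow> (bool list \<Rightarrow> bool option) \<Rightarrow> bool list set" where
  "dom_pf N f = {x. length x = N \<and> f x \<noteq> None}"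

definition preim :: "nat \<Rightarrow> (bool list \<Rightarrow> bool option) \<Rightarrow> bool \<Rightarrow> bool list set" where
  "preim N f b = {x. length x = N \<and> f x = Some b}"

datatype dtree = Leaf bool | Node nat dtree dtree

fun depth :: "dtree \<Rightarrow> nat" where
  "depth (Leaf b) = 0"
| "depth (Node i t0 t1) = Suc (max (depth t0) (depth t1))"

fun eval_dt :: "dtree \<Rightarrow> bool list \<Rightarrow> bool" where
  "eval_dt (Leaf b) x = b"
| "eval_dt (Node i t0 t1) x = (if x ! i then eval_dt t1 x else eval_dt t0 x)"

fun cost_dt :: "dtree \<Rightarrow> bool list \<Rightarrow> nat" where
  "cost_dt (Leaf b) x = 0"
| "cost_dt (Node i t0 t1) x = Suc (if x ! i then cost_dt t1 x else cost_dt t0 x)"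

fun valid_dt :: "nat \<Rightarrow> dtree \<Rightarrow> bool" where
  "valid_dt N (Leaf b) = True"
| "valid_dt N (Node i t0 t1) = (i < N \<and> valid_dt N t0 \<and> valid_dt N t1)"

definition computes :: "nat \<Rightarrow> (bool list \<Rightarrow> bool option) \<Rightarrow> dtree \<Rightarrow> bool" where
  "computes N f T \<longleftrightarrow> valid_dt N T \<and> (\<forall>x\<in>dom_pf N f. f x = Some (eval_dt T x))"

definition D_cc :: "nat \<Rightarrow> (bool list \<Rightarrow> bool option) \<Rightarrow> nat" where
  "D_cc N f = (LEAST d. \<exists>T. computes N f T \<and> depth T = d)"

definition rdt_cost :: "nat \<Rightarrow> (bool list \<Rightarrow> bool option) \<Rightarrow> dtree pmf \<Rightarrow> real" where
  "rdt_cost N f P = Max (insert 0 ((\<lambda>x. measure_pmf.expectation P (\<lambda>T. real (cost_dt T x))) ` dom_pf N f))"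

definition R0_cc :: "nat \<Rightarrow> (bool list \<Rightarrow> bool option) \<Rightarrow> real" where
  "R0_cc N f = Inf {rdt_cost N f P | P. finite (set_pmf P) \<and> (\<forall>T\<in>set_pmf P. computes N f T)}"

definition constant_pf :: "nat \<Rightarrow> (bool list \<Rightarrow> bool option) \<Rightarrow> bool" where
  "constant_pf N f \<longleftrightarrow> (\<exists>b. \<forall>x\<in>dom_pf N f. f x = Some b)"

definition Bal :: "nat \<Rightarrow> (bool list \<Rightarrow> bool option) \<Rightarrow> real" where
  "Bal N f = (if constant_pf N f then 0
     else min (1 + log 2 (real (card (preim N f False)))) (1 + log 2 (real (card (preim N f True)))))"

end

theory Submission
  imports Defs
begin

fun graft :: "nat \<Rightarrow> dtree \<Rightarrow> dtree \<Rightarrow> dtree" where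
  "graft k (Leaf b) C = Leaf b"
| "graft 0 (Node i t0 t1) C = C"
| "graft (Suc k) (Node i t0 t1) C = Node i (graft k t0 C) (graft k t1 C)"

lemma graft_valid: "valid_dt N T \<Longrightarrow> valid_dt N C \<Longrightarrow> valid_dt N (graft k T C)"
  by (induction k T C rule: graft.induct) auto

lemma graft_eval: "eval_dt (graft k T C) x = (if cost_dt T x \<le> k then eval_dt T x else eval_dt C x)"
  by (induction k T C rule: graft.induct) auto

lemma graft_depth: "depth (graft k T C) \<le> k + depth C"
  by (induction k T C rule: graft.induct) auto

fun ft :: "nat \<Rightarrow> (bool list \<Rightarrow> bool) \<Rightarrow> dtree" where
  "ft 0 g = Leaf (g [])"
| "ft (Suc n) g = Node n (ft n (\<lambda>xs. g (xs @ [False]))) (ft n (\<lambda>xs. g (xs @ [True])))"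

lemma ft_eval: "n \<le> length x \<Longrightarrow> eval_dt (ft n g) x = g (take n x)"
proof (induction n arbitrary: g)
  case 0 then show ?case by simp
next
  case (Suc n)
  have "take (Suc n) x = take n x @ [x ! n]" using Suc.prems by (simp add: take_Suc_conv_app_nth)
  then show ?case using Suc by auto
qed

lemma ft_valid: "n \<le> N \<Longrightarrow> valid_dt N (ft n g)"
  by (induction n arbitrary: g) auto

lemma finite_dom: "finite (dom_pf N f)"
proof -
  have "finite {xs. set xs \<subseteq> (UNIV::bool set) \<and> length xs = N}"
    by (rule finite_lists_length_eq) simp
  then show ?thesis unfolding dom_pf_def by (rule rev_finite_subset) auto
qed

lemma full_computes: "computes N f (ft N (\<lambda>x. the (f x)))"
  unfolding computes_def using ft_valid[of N N] ft_eval[of N] by (auto simp: dom_pf_def)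

lemma avg:
  fixes P :: "dtree pmf" and k :: nat and c :: real
  assumes fin: "finite (set_pmf P)"
    and S: "finite S" "S \<subseteq> dom_pf N f"
    and c: "\<And>x. x \<in> dom_pf N f \<Longrightarrow> measure_pmf.expectation P (\<lambda>T. real (cost_dt T x)) \<le> c"
    and k: "2 * c < real k + 1"
  shows "\<exists>T\<in>set_pmf P. 2 * card {x\<in>S. k < cost_dt T x} \<le> card S"
proof (rule ccontr)
  assume "\<not> ?thesis"
  then have big: "\<And>T. T \<in> set_pmf P \<Longrightarrow> card S + 1 \<le> 2 * card {x\<in>S. k < cost_dt T x}" by force
  let ?A = "set_pmf P"
  have E: "measure_pmf.expectation P (\<lambda>T. real (cost_dt T x)) = (\<Sum>T\<in>?A. real (cost_dt T x) * pmf P T)" for x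
    by (rule integral_measure_pmf_real) (use fin in auto)
  have lowT: "real (k+1) * card {x\<in>S. k < cost_dt T x} \<le> (\<Sum>x\<in>S. real (cost_dt T x))" for T
  proof -
    have "(k+1) * card {x\<in>S. k < cost_dt T x} = (\<Sum>x\<in>{x\<in>S. k < cost_dt T x}. k+1)" by simp
    also have "\<dots> \<le> (\<Sum>x\<in>{x\<in>S. k < cost_dt T x}. cost_dt T x)" by (rule sum_mono) auto
    also have "\<dots> \<le> (\<Sum>x\<in>S. cost_dt T x)" by (rule sum_mono2) (use S in auto)
    finally show ?thesis by (metis of_nat_le_iff of_nat_mult of_nat_sum)
  qed
  have "(\<Sum>x\<in>S. measure_pmf.expectation P (\<lambda>T. real (cost_dt T x))) \<le> (\<Sum>x\<in>S. c)"
    by (rule sum_mono) (use S c in auto)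
  then have up: "(\<Sum>x\<in>S. measure_pmf.expectation P (\<lambda>T. real (cost_dt T x))) \<le> card S * c" by simp
  have "(\<Sum>x\<in>S. measure_pmf.expectation P (\<lambda>T. real (cost_dt T x)))
      = (\<Sum>T\<in>?A. pmf P T * (\<Sum>x\<in>S. real (cost_dt T x)))"
    by (simp add: E sum.swap[of _ S] sum_distrib_left mult.commute)
  also have "\<dots> \<ge> (\<Sum>T\<in>?A. pmf P T * (real (k+1) * ((card S + 1) / 2)))"
  proof (rule sum_mono)
    fix T assume T: "T \<in> ?A"
    have "real (k+1) * ((card S + 1) / 2) \<le> real (k+1) * card {x\<in>S. k < cost_dt T x}"
      using big[OF T] by (intro mult_left_mono) auto
    also have "\<dots> \<le> (\<Sum>x\<in>S. real (cost_dt T x))" by (rule lowT)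
    finally show "pmf P T * (real (k+1) * ((card S + 1) / 2)) \<le> pmf P T * (\<Sum>x\<in>S. real (cost_dt T x))"
      by (intro mult_left_mono) auto
  qed
  also have "(\<Sum>T\<in>?A. pmf P T * (real (k+1) * ((card S + 1) / 2))) = real (k+1) * ((card S + 1) / 2)"
    by (simp only: sum_distrib_right[symmetric] sum_pmf_eq_1[OF fin order.refl])
  finally have "real (k+1) * ((card S + 1) / 2) \<le> card S * c" using up by linarith
  moreover have "card S * c \<le> card S * ((real k + 1) / 2)" using k by (intro mult_left_mono) auto
  ultimately show False by (simp add: field_simps)
qed

lemma build:
  fixes P :: "dtree pmf" and k :: nat and c :: real and b :: bool
  assumes fin: "finite (set_pmf P)"
    and comp: "\<And>T. T \<in> set_pmf P \<Longrightarrow> computes N f T"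
    and c: "\<And>x. x \<in> dom_pf N f \<Longrightarrow> measure_pmf.expectation P (\<lambda>T. real (cost_dt T x)) \<le> c"
    and k: "2 * c < real k + 1"
  shows "finite S \<Longrightarrow> S \<subseteq> preim N f b \<Longrightarrow> \<exists>C. valid_dt N C \<and>
     real (depth C) \<le> (if S = {} then 0 else real k * (1 + log 2 (card S))) \<and>
     (\<forall>x\<in>dom_pf N f. (f x = Some (\<not> b) \<or> x \<in> S) \<longrightarrow> f x = Some (eval_dt C x))"
proof (induction "card S" arbitrary: S rule: less_induct)
  case less
  show ?case
  proof (cases "S = {}")
    case True
    then show ?thesis by (intro exI[of _ "Leaf (\<not> b)"]) auto
  next
    case False
    have Sd: "S \<subseteq> dom_pf N f" using less.prems by (auto simp: preim_def dom_pf_def)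
    obtain T where T: "T \<in> set_pmf P" and h: "2 * card {x\<in>S. k < cost_dt T x} \<le> card S"
      using avg[OF fin less.prems(1) Sd c k] by blast
    define S' where "S' = {x\<in>S. k < cost_dt T x}"
    have cS: "card S > 0" using False less.prems by auto
    have lt: "card S' < card S" using h cS unfolding S'_def by linarith
    have "finite S'" "S' \<subseteq> preim N f b" using less.prems unfolding S'_def by auto
    then obtain C where C: "valid_dt N C"
      "real (depth C) \<le> (if S' = {} then 0 else real k * (1 + log 2 (card S')))"
      "\<forall>x\<in>dom_pf N f. (f x = Some (\<not> b) \<or> x \<in> S') \<longrightarrow> f x = Some (eval_dt C x)"
      using less.hyps[OF lt] by blast
    have cT: "computes N f T" using comp T .
    have valid: "valid_dt N (graft k T C)" using graft_valid cT C(1) unfolding computes_def by blast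
    have dC: "real (depth C) \<le> real k * log 2 (card S)"
    proof (cases "S' = {}")
      case True then show ?thesis using C(2) cS by simp
    next
      case False
      have cS': "card S' > 0" using False \<open>finite S'\<close> by auto
      have "2 * real (card S') \<le> real (card S)" using h unfolding S'_def by linarith
      then have "log 2 (2 * card S') \<le> log 2 (card S)" using cS' by (subst log_le_cancel_iff) auto
      then have "1 + log 2 (card S') \<le> log 2 (card S)" using cS' by (simp add: log_mult)
      then have "real k * (1 + log 2 (card S')) \<le> real k * log 2 (card S)" by (intro mult_left_mono) auto
      then show ?thesis using C(2) False by simp
    qed
    have "real (depth (graft k T C)) \<le> real k + real (depth C)" using graft_depth
      by (metis of_nat_add of_nat_le_iff)
    also have "\<dots> \<le> real k * (1 + log 2 (card S))" using dC by (simp add: algebra_simps)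
    finally have dep: "real (depth (graft k T C)) \<le> real k * (1 + log 2 (card S))" .
    have corr: "\<forall>x\<in>dom_pf N f. (f x = Some (\<not> b) \<or> x \<in> S) \<longrightarrow> f x = Some (eval_dt (graft k T C) x)"
    proof (intro ballI impI)
      fix x assume x: "x \<in> dom_pf N f" "f x = Some (\<not> b) \<or> x \<in> S"
      show "f x = Some (eval_dt (graft k T C) x)"
      proof (cases "cost_dt T x \<le> k")
        case True then show ?thesis using cT x by (simp add: graft_eval computes_def)
      next
        case False
        then have "f x = Some (\<not> b) \<or> x \<in> S'" using x unfolding S'_def by auto
        then show ?thesis using C(3) x False by (auto simp: graft_eval)
      qed
    qed
    show ?thesis using valid dep corr False by (intro exI[of _ "graft k T C"]) simp
  qed
qed

lemma D_le:
  assumes "computes N f T" shows "D_cc N f \<le> depth T"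
  unfolding D_cc_def by (rule Least_le) (use assms in blast)

lemma main_bound:
  fixes P :: "dtree pmf" and b :: bool
  assumes fin: "finite (set_pmf P)"
    and comp: "\<forall>T\<in>set_pmf P. computes N f T"
    and ne: "preim N f b \<noteq> {}"
  shows "real (D_cc N f) \<le> 2 * rdt_cost N f P * (1 + log 2 (card (preim N f b)))"
proof -
  define c where "c = rdt_cost N f P"
  define k where "k = nat \<lfloor>2 * c\<rfloor>"
  have cfin: "finite (insert 0 ((\<lambda>x. measure_pmf.expectation P (\<lambda>T. real (cost_dt T x))) ` dom_pf N f))"
    using finite_dom by simp
  have c: "measure_pmf.expectation P (\<lambda>T. real (cost_dt T x)) \<le> c" if "x \<in> dom_pf N f" for x
    unfolding c_def rdt_cost_def by (rule Max_ge[OF cfin]) (use that in auto)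
  have c0: "0 \<le> c" unfolding c_def rdt_cost_def by (rule Max_ge[OF cfin]) auto
  have k1: "2 * c < real k + 1" unfolding k_def using c0 by linarith
  have k2: "real k \<le> 2 * c" unfolding k_def using c0 by linarith
  have pf: "finite (preim N f b)"
    by (rule rev_finite_subset[OF finite_dom[of N f]]) (auto simp: preim_def dom_pf_def)
  obtain C where C: "valid_dt N C"
     "real (depth C) \<le> (if preim N f b = {} then 0 else real k * (1 + log 2 (card (preim N f b))))"
     "\<forall>x\<in>dom_pf N f. (f x = Some (\<not> b) \<or> x \<in> preim N f b) \<longrightarrow> f x = Some (eval_dt C x)"
    using build[OF fin _ c k1 pf] comp by blast
  have "computes N f C" unfolding computes_def
  proof (intro conjI ballI)
    fix x assume x: "x \<in> dom_pf N f"
    then have "f x = Some (\<not> b) \<or> x \<in> preim N f b"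
      by (cases "f x") (auto simp: dom_pf_def preim_def)
    then show "f x = Some (eval_dt C x)" using C(3) x by blast
  qed (use C(1) in \<open>simp?\<close>)
  then have "real (D_cc N f) \<le> real (depth C)" using D_le by simp
  also have "\<dots> \<le> real k * (1 + log 2 (card (preim N f b)))" using C(2) ne by simp
  also have "\<dots> \<le> 2 * c * (1 + log 2 (card (preim N f b)))"
  proof (rule mult_right_mono[OF k2])
    have "card (preim N f b) \<ge> 1" using ne pf by (simp add: Suc_le_eq card_gt_0_iff)
    then show "0 \<le> 1 + log 2 (card (preim N f b))" by simp
  qed
  finally show ?thesis unfolding c_def .
qed

theorem theorem24:
  fixes N :: nat and f :: "bool list \<Rightarrow> bool option"
  shows "real (D_cc N f) \<le> 2 * R0_cc N f * Bal N f"
proof (cases "constant_pf N f")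
  case True
  then obtain b where b: "\<forall>x\<in>dom_pf N f. f x = Some b" unfolding constant_pf_def by blast
  have "computes N f (Leaf b)" using b by (simp add: computes_def)
  then have "D_cc N f = 0" using D_le[of N f "Leaf b"] by simp
  then show ?thesis using True by (simp add: Bal_def)
next
  case False
  have ne: "preim N f b \<noteq> {}" for b
  proof
    assume "preim N f b = {}"
    then have "\<forall>x\<in>dom_pf N f. f x = Some (\<not> b)"
      by (auto simp: dom_pf_def preim_def)
    then show False using False unfolding constant_pf_def by blast
  qed
  have pf: "finite (preim N f b)" for b
    by (rule rev_finite_subset[OF finite_dom[of N f]]) (auto simp: preim_def dom_pf_def)
  have cardge: "card (preim N f b) \<ge> 1" for b using ne pf by (simp add: Suc_le_eq card_gt_0_iff)
  define B where "B = Bal N f"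
  have B: "B = min (1 + log 2 (real (card (preim N f False)))) (1 + log 2 (real (card (preim N f True))))"
    using False unfolding B_def Bal_def by simp
  have Bpos: "B \<ge> 1" unfolding B using cardge[of True] cardge[of False] by simp
  define X where "X = {rdt_cost N f P | P. finite (set_pmf P) \<and> (\<forall>T\<in>set_pmf P. computes N f T)}"
  have Xne: "X \<noteq> {}"
    unfolding X_def using full_computes[of N f]
    by (intro notI) (auto dest!: spec[of _ "return_pmf (ft N (\<lambda>x. the (f x)))"] simp del: ft.simps)
  have lb: "real (D_cc N f) / (2 * B) \<le> y" if yX: "y \<in> X" for y
  proof -
    obtain P where P: "y = rdt_cost N f P" "finite (set_pmf P)" "\<forall>T\<in>set_pmf P. computes N f T"
      using yX unfolding X_def by blast
    have "real (D_cc N f) \<le> 2 * y * B"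
      using main_bound[OF P(2,3) ne[of False]] main_bound[OF P(2,3) ne[of True]] P(1)
      unfolding B by (simp add: min_def)
    then show ?thesis using Bpos by (simp add: field_simps)
  qed
  have "real (D_cc N f) / (2 * B) \<le> Inf X" by (rule cInf_greatest[OF Xne lb])
  then have "real (D_cc N f) \<le> 2 * Inf X * B" using Bpos by (simp add: field_simps)
  then show ?thesis unfolding B_def X_def R0_cc_def .
qed

end
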